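(* Let $N\ge3$ and $1\le k\le N-1$ be integers with $\gcd(N,k)=1$, and let $p$ be an odd prime with $p\equiv\pm1$ or $0\pmod N$. Let $\tau$ lie in the upper half-plane, $q=e^{2\pi i\tau}$, and $q_j=e^{2\pi i(\tau+j)/p}$ for $j=0,\dots,p-1$. Then \[\left(1+\chi_{-N}(p)p^2\right)J_{N\tau}(q^k)=\sum_{j=0}^{p-1}p\,J_{\frac{N(\tau+j)}{p}}(q_j^k)+\chi_{-N}(p)\,J_{Np\tau}(q^{pk}).\]
   Context: Let $J(z)=\log|z|\log|1-z|$ and $B_3(x)=x^3-\frac32x^2+\frac12x$. For $\sigma$ in the upper half-plane, with $Q=e^{2\pi i\sigma}$, and $z\in\mathbb{C}^*$ not in $Q^{\mathbb{Z}}$, define \[J_\sigma(z)=\sum_{n=0}^\infty J(zQ^n)-\sum_{n=1}^\infty J(z^{-1}Q^n)+\frac13\log^2|Q|\,B_3\!\left(\frac{\log|z|}{\log|Q|}\right).\] Here $\chi_{-N}(p)$ equals $1$ if $p\equiv1\pmod N$, $-1$ if $p\equiv-1\pmod N$, and $0$ if $p\equiv0\pmod N$. *)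

theory Defs
  imports "HOL-Analysis.Analysis"
begin

definition Jfun :: "complex \<Rightarrow> real" where
  "Jfun z = ln (cmod z) * ln (cmod (1 - z))"

definition B3 :: "real \<Rightarrow> real" where
  "B3 x = x ^ 3 - 3 / 2 * x ^ 2 + 1 / 2 * x"

definition Jsigma :: "complex \<Rightarrow> complex \<Rightarrow> real" where
  "Jsigma \<sigma> z =
     (let Q = exp (2 * pi * \<i> * \<sigma>) in
       (\<Sum>n. Jfun (z * Q ^ n)) - (\<Sum>n. Jfun (inverse z * Q ^ (Suc n)))
       + 1 / 3 * (ln (cmod Q)) ^ 2 * B3 (ln (cmod z) / ln (cmod Q)))"

definition chiN :: "nat \<Rightarrow> nat \<Rightarrow> int" where
  "chiN N p = (if p mod N = 1 then 1 else if p mod N = N - 1 then -1 else 0)"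

end

theory Submission
  imports Defs "HOL-Computational_Algebra.Fundamental_Theorem_Algebra"
begin

lemma prod_roots_unity:
  assumes "n > 0"
  shows "(\<Prod>z\<in>{z::complex. z ^ n = 1}. (x - z)) = x ^ n - 1"
proof -
  define P :: "complex poly" where "P = monom 1 n + [:-1:]"
  have poly: "poly P y = y ^ n - 1" for y by (simp add: P_def poly_monom)
  have deg: "degree P = n" using assms unfolding P_def
    by (subst degree_add_eq_left) (simp_all add: degree_monom_eq)
  have lc: "lead_coeff P = 1" using assms deg unfolding P_def
    by (cases n) (simp_all add: coeff_monom)
  have pd: "pderiv P = monom (of_nat n) (n - 1)" unfolding P_def
    by (simp add: pderiv_add pderiv_monom)
  have "rsquarefree P"
    unfolding rsquarefree_roots
  proof (intro allI notI)
    fix a assume h: "poly P a = 0 \<and> poly (pderiv P) a = 0"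
    then have "a ^ n = 1" by (simp add: poly)
    then have "a \<noteq> 0" using assms by (auto simp: power_0_left)
    moreover have "of_nat n * a ^ (n - 1) = 0" using h by (simp add: pd poly_monom)
    ultimately show False using assms by simp
  qed
  then have "smult (lead_coeff P) (\<Prod>z|poly P z = 0. [:-z, 1:]) = P"
    by (rule complex_poly_decompose_rsquarefree)
  then have "(\<Prod>z|poly P z = 0. [:-z, 1:]) = P" by (simp add: lc)
  then have "poly (\<Prod>z|poly P z = 0. [:-z, 1:]) x = poly P x" by simp
  then show ?thesis by (simp add: poly_prod poly)
qed


lemma exp_period_nat:
  fixes p :: nat assumes "p > 0"
  shows "exp (2 * pi * \<i> * of_nat j / of_nat p) = exp (2 * pi * \<i> * of_nat (j mod p) / of_nat p)"
proof -
  have j: "(of_nat j :: complex) = of_nat p * of_nat (j div p) + of_nat (j mod p)"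
    by (metis of_nat_add of_nat_mult div_mult_mod_eq mult.commute)
  have "2 * pi * \<i> * of_nat j / of_nat p = of_nat (j div p) * (2 * pi * \<i>) + 2 * pi * \<i> * of_nat (j mod p) / of_nat p"
    using assms by (simp add: j field_simps)
  then have "exp (2 * pi * \<i> * of_nat j / of_nat p) = exp (of_nat (j div p) * (2 * pi * \<i>)) * exp (2 * pi * \<i> * of_nat (j mod p) / of_nat p)"
    by (simp add: exp_add)
  also have "exp (of_nat (j div p) * (2 * pi * \<i>)) = 1"
    by (simp add: exp_of_nat_mult)
  finally show ?thesis by simp
qed

lemma bij_roots_mult:
  fixes p m :: nat assumes "prime p" "\<not> p dvd m"
  shows "bij_betw (\<lambda>j. exp (2 * pi * \<i> * of_nat (j * m) / of_nat p)) {..<p} {z. z ^ p = 1}"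
proof -
  have p0: "p > 0" using assms prime_gt_0_nat by blast
  define h where "h = (\<lambda>j. (j * m) mod p)"
  have cop: "coprime m p" using assms by (metis coprime_commute prime_imp_coprime)
  have inj: "inj_on h {..<p}"
  proof (rule inj_onI)
    fix x y assume "x \<in> {..<p}" "y \<in> {..<p}" "h x = h y"
    then have "int (x * m) mod int p = int (y * m) mod int p"
      unfolding of_nat_mod[symmetric] by (simp add: h_def)
    then have "int p dvd (int x - int y) * int m"
      by (simp add: mod_eq_dvd_iff left_diff_distrib)
    moreover have "prime (int p)" using assms by simp
    moreover have "\<not> int p dvd int m" using assms by simp
    ultimately have "int p dvd (int x - int y)" using prime_dvd_mult_iff by blast
    then obtain c where c: "int x - int y = int p * c" by (auto elim: dvdE)
    have "\<bar>int x - int y\<bar> < int p" using \<open>x \<in> {..<p}\<close> \<open>y \<in> {..<p}\<close> by auto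
    then have "c = 0" using c p0 by (auto simp: abs_mult)
    then show "x = y" using c by simp
  qed
  have sub: "h ` {..<p} \<subseteq> {..<p}" using p0 by (auto simp: h_def)
  have img: "h ` {..<p} = {..<p}"
    using inj sub by (simp add: card_image card_subset_eq)
  have bh: "bij_betw h {..<p} {..<p}" using inj img by (simp add: bij_betw_def)
  have bg: "bij_betw (\<lambda>k. cis (2 * pi * real k / real p)) {..<p} {z. z ^ p = 1}"
    using p0 by (rule Complex.bij_betw_roots_unity)
  have eq: "exp (2 * pi * \<i> * of_nat (j * m) / of_nat p) = cis (2 * pi * real (h j) / real p)" for j
    unfolding h_def by (subst exp_period_nat[OF p0]) (simp add: cis_conv_exp field_simps)
  have "bij_betw ((\<lambda>k. cis (2 * pi * real k / real p)) \<circ> h) {..<p} {z. z ^ p = 1}"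
    using bh bg by (rule bij_betw_trans)
  then have "bij_betw (\<lambda>j. cis (2 * pi * real (h j) / real p)) {..<p} {z. z ^ p = 1}"
    by (simp add: comp_def)
  then show ?thesis by (subst eq) 
qed

lemma prod_one_minus_roots:
  fixes p m :: nat and u :: complex assumes "prime p" "\<not> p dvd m"
  shows "(\<Prod>j<p. (1 - u * exp (2 * pi * \<i> * of_nat (j * m) / of_nat p))) = 1 - u ^ p"
proof -
  have p0: "p > 0" using assms prime_gt_0_nat by blast
  have "(\<Prod>j<p. (1 - u * exp (2 * pi * \<i> * of_nat (j * m) / of_nat p))) = (\<Prod>z\<in>{z. z ^ p = 1}. (1 - u * z))"
    using bij_roots_mult[OF assms] by (rule prod.reindex_bij_betw)
  also have "\<dots> = 1 - u ^ p"
  proof (cases "u = 0")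
    case True then show ?thesis using p0 by simp
  next
    case False
    have "(\<Prod>z\<in>{z. z ^ p = 1}. (1 - u * z)) = (\<Prod>z\<in>{z. z ^ p = 1}. u * (inverse u - z))"
      using False by (intro prod.cong) (auto simp: field_simps)
    also have "\<dots> = u ^ card {z::complex. z ^ p = 1} * (\<Prod>z\<in>{z. z ^ p = 1}. (inverse u - z))"
      by (simp add: prod.distrib)
    also have "\<dots> = u ^ p * (inverse u ^ p - 1)"
      using p0 by (simp add: card_roots_unity_eq prod_roots_unity)
    also have "\<dots> = 1 - u ^ p" using False by (simp add: field_simps power_inverse)
    finally show ?thesis .
  qed
  finally show ?thesis .
qed


definition ax :: "complex \<Rightarrow> nat \<Rightarrow> real" where
  "ax x m = real m * ln (cmod (1 - x ^ m))"

lemma summable_n_pow: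
  fixes r :: real assumes "0 \<le> r" "r < 1"
  shows "summable (\<lambda>n. real n * r ^ n)"
proof -
  obtain N :: nat where N: "real N > 2 / (1 - r)" using reals_Archimedean2 by blast
  show ?thesis
proof (rule summable_ratio_test[where N=N])
  define c where "c = (1 + r) / 2"
  show "c < 1" using assms by (simp add: c_def)
  show "norm (real (Suc n) * r ^ Suc n) \<le> c * norm (real n * r ^ n)" if "N \<le> n" for n
  proof -
    have n: "real n > 2 / (1 - r)" using N that by linarith
    then have "real n * (1 - r) > 2" using assms by (simp add: field_simps)
    then have "(real n + 1) * r \<le> c * real n" using assms by (simp add: c_def field_simps)
    then have "(real n + 1) * r * r ^ n \<le> c * real n * r ^ n"
      using assms by (intro mult_right_mono) auto
    then show "norm (real (Suc n) * r ^ Suc n) \<le> c * norm (real n * r ^ n)"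
      using assms by (simp add: abs_mult c_def algebra_simps)
  qed
qed
qed

lemma ln_norm_one_minus_bound:
  fixes y :: complex assumes "cmod y < 1"
  shows "\<bar>ln (cmod (1 - y))\<bar> \<le> cmod y / (1 - cmod y)"
proof -
  have lo: "1 - cmod y \<le> cmod (1 - y)" using norm_triangle_ineq2[of 1 y] by simp
  have hi: "cmod (1 - y) \<le> 1 + cmod y" using norm_triangle_ineq4[of 1 y] by simp
  have pos: "cmod (1 - y) > 0" using lo assms by linarith
  show ?thesis
  proof (cases "cmod (1 - y) \<ge> 1")
    case True
    then have "\<bar>ln (cmod (1 - y))\<bar> = ln (cmod (1 - y))" by simp
    also have "\<dots> \<le> cmod (1 - y) - 1" using pos by (rule ln_le_minus_one)
    also have "\<dots> \<le> cmod y" using hi by simp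
    also have "\<dots> \<le> cmod y / (1 - cmod y)" using assms
      by (simp add: le_divide_eq mult_left_le)
    finally show ?thesis .
  next
    case False
    have "0 < 1 - cmod y" using assms by simp
    then have cp: "0 < cmod (1 - y) * (1 - cmod y)" using pos by simp
    from False have "\<bar>ln (cmod (1 - y))\<bar> = ln (1 / cmod (1 - y))" using pos by (simp add: ln_div)
    also have "\<dots> \<le> 1 / cmod (1 - y) - 1" using pos by (intro ln_le_minus_one) simp
    also have "\<dots> \<le> 1 / (1 - cmod y) - 1" using lo assms cp
      by (intro diff_right_mono divide_left_mono) auto
    also have "\<dots> = cmod y / (1 - cmod y)" using assms by (simp add: field_simps)
    finally show ?thesis .
  qed
qed

lemma ax_bound:
  assumes "cmod x < 1"
  shows "\<bar>ax x m\<bar> \<le> real m * cmod x ^ m / (1 - cmod x)"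
proof (cases "m = 0")
  case True then show ?thesis by (simp add: ax_def)
next
  case False
  have r: "cmod x ^ m \<le> cmod x" using False assms by (simp add: power_le_one_iff power_decreasing) (metis One_nat_def Suc_leI neq0_conv norm_ge_zero order_less_imp_le power_decreasing power_one_right)
  have y: "cmod (x ^ m) < 1" using r assms by (simp add: norm_power)
  have "\<bar>ax x m\<bar> = real m * \<bar>ln (cmod (1 - x ^ m))\<bar>" by (simp add: ax_def abs_mult)
  also have "\<dots> \<le> real m * (cmod (x ^ m) / (1 - cmod (x ^ m)))"
    using ln_norm_one_minus_bound[OF y] by (intro mult_left_mono) auto
  also have "\<dots> \<le> real m * (cmod x ^ m / (1 - cmod x))"
  proof -
    have a: "0 < 1 - cmod x ^ m" using y by (simp add: norm_power)
    have b: "0 < 1 - cmod x" using assms by simp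
    have "0 < (1 - cmod x ^ m) * (1 - cmod x)" using a b by simp
    moreover have "1 - cmod x \<le> 1 - cmod x ^ m" using r by simp
    ultimately have "cmod x ^ m / (1 - cmod x ^ m) \<le> cmod x ^ m / (1 - cmod x)"
      by (intro divide_left_mono) auto
    then show ?thesis by (intro mult_left_mono) (auto simp: norm_power)
  qed
  finally show ?thesis by simp
qed

lemma summable_ax:
  assumes "cmod x < 1" "v \<ge> 1"
  shows "summable (\<lambda>n. ax x (u + v * n))"
proof (rule summable_comparison_test)
  define r where "r = cmod x"
  have r: "0 \<le> r" "r < 1" using assms by (auto simp: r_def)
  have s: "summable (\<lambda>n. (real u * r ^ n + real v * (real n * r ^ n)) / (1 - r))"
    using r summable_n_pow[OF r] by (intro summable_divide summable_add summable_mult) auto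
  show "\<exists>N. \<forall>n\<ge>N. norm (ax x (u + v * n)) \<le> (real u * r ^ n + real v * (real n * r ^ n)) / (1 - r)"
  proof (intro exI allI impI)
    fix n :: nat
    have "norm (ax x (u + v * n)) \<le> real (u + v * n) * r ^ (u + v * n) / (1 - r)"
      using ax_bound[OF assms(1), of "u + v * n"] by (simp add: r_def)
    also have "\<dots> \<le> real (u + v * n) * r ^ n / (1 - r)"
    proof -
      have "r ^ (u + v * n) \<le> r ^ n" using r assms(2)
        by (intro power_decreasing) (auto intro: order.trans[of n "v * n"])
      then show ?thesis using r by (intro divide_right_mono mult_left_mono) auto
    qed
    also have "\<dots> = (real u * r ^ n + real v * (real n * r ^ n)) / (1 - r)"
      by (simp add: algebra_simps)
    finally show "norm (ax x (u + v * n)) \<le> (real u * r ^ n + real v * (real n * r ^ n)) / (1 - r)" .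
  qed
  show "summable (\<lambda>n. (real u * r ^ n + real v * (real n * r ^ n)) / (1 - r))" by (rule s)
qed


lemma Jfun_pow:
  assumes "x \<noteq> 0"
  shows "Jfun (x ^ m) = ln (cmod x) * ax x m"
  using assms by (simp add: Jfun_def ax_def norm_power ln_realpow)

lemma Jsigma_eval:
  assumes Q: "exp (2 * pi * \<i> * \<sigma>) = x ^ N" and x: "x \<noteq> 0" "cmod x < 1"
    and k: "0 < k" "k < N"
  shows "Jsigma \<sigma> (x ^ k) = ln (cmod x) * (\<Sum>n. ax x (k + N * n))
           - ln (cmod x) * (\<Sum>n. ax x (N - k + N * n))
           + 1 / 3 * (real N * ln (cmod x)) ^ 2 * B3 (real k / real N)"
proof -
  have e1: "Jfun (x ^ k * (x ^ N) ^ n) = ln (cmod x) * ax x (k + N * n)" for n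
    using x by (simp add: Jfun_pow power_add power_mult flip: power_add power_mult)
  have "inverse (x ^ k) * (x ^ N) ^ Suc n = x ^ (N - k + N * n)" for n
  proof -
    have "(x ^ N) ^ Suc n = x ^ k * x ^ (N - k + N * n)"
      using k by (simp add: power_mult[symmetric] power_add[symmetric])
    then show ?thesis using x by (simp add: field_simps)
  qed
  then have e2: "Jfun (inverse (x ^ k) * (x ^ N) ^ Suc n) = ln (cmod x) * ax x (N - k + N * n)" for n
    using x by (simp add: Jfun_pow)
  have lx: "ln (cmod x) \<noteq> 0" using x by simp
  have lQ: "ln (cmod (x ^ N)) = real N * ln (cmod x)" using x by (simp add: norm_power ln_realpow)
  have lz: "ln (cmod (x ^ k)) = real k * ln (cmod x)" using x by (simp add: norm_power ln_realpow)
  have r: "ln (cmod (x ^ k)) / ln (cmod (x ^ N)) = real k / real N" using lx k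
    by (simp add: lQ lz)
  show ?thesis
    unfolding Jsigma_def Let_def Q e1 e2 r
    using summable_ax[OF x(2), of N k] summable_ax[OF x(2), of N "N - k"] k
    by (simp add: suminf_mult lQ)
qed


lemma exp_int_mult_2pi: "exp (of_nat n * (2 * pi * \<i>)) = 1"
  by (simp add: exp_of_nat_mult)

lemma norm_qj:
  assumes "Im \<tau> > 0" "p > 0"
  shows "cmod (exp (2 * pi * \<i> * (\<tau> + of_nat j) / of_nat p)) = exp (- 2 * pi * Im \<tau> / real p)"
  using assms by (simp add: norm_exp_eq_Re)

lemma sum_ax_qj:
  fixes p m :: nat and \<tau> :: complex
  assumes tau: "Im \<tau> > 0" and p: "prime p"
  defines "q \<equiv> exp (2 * pi * \<i> * \<tau>)"
  shows "(\<Sum>j<p. ax (exp (2 * pi * \<i> * (\<tau> + of_nat j) / of_nat p)) m)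
         = (if p dvd m then real p ^ 2 * ax q (m div p) else ax q m)"
proof -
  have p0: "p > 0" using p prime_gt_0_nat by blast
  define w where "w = (\<lambda>j::nat. exp (2 * pi * \<i> * (\<tau> + of_nat j) / of_nat p))"
  have wm: "w j ^ m = exp (of_nat m * (2 * pi * \<i> * (\<tau> + of_nat j) / of_nat p))" for j
    unfolding w_def by (rule exp_of_nat_mult[symmetric])
  show ?thesis
  proof (cases "p dvd m")
    case True
    then obtain m' where m': "m = p * m'" by (auto elim: dvdE)
    have "w j ^ m = q ^ m'" for j
    proof -
      have "of_nat m * (2 * pi * \<i> * (\<tau> + of_nat j) / of_nat p)
            = of_nat m' * (2 * pi * \<i> * \<tau>) + of_nat (j * m') * (2 * pi * \<i>)"
        using p0 by (simp add: m' field_simps)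
      moreover have "exp (of_nat (j * m') * (2 * pi * \<i>)) = 1" by (rule exp_int_mult_2pi)
      ultimately show ?thesis
        by (simp only: wm exp_add q_def exp_of_nat_mult mult_1_right)
    qed
    then have "(\<Sum>j<p. ax (w j) m) = real p * (real m * ln (cmod (1 - q ^ m')))"
      by (simp add: ax_def)
    also have "\<dots> = real p ^ 2 * ax q (m div p)" using p0
      by (simp add: m' ax_def power2_eq_square)
    finally show ?thesis using True by (simp add: w_def)
  next
    case False
    define u where "u = exp (2 * pi * \<i> * of_nat m * \<tau> / of_nat p)"
    have wm2: "w j ^ m = u * exp (2 * pi * \<i> * of_nat (j * m) / of_nat p)" for j
    proof -
      have "of_nat m * (2 * pi * \<i> * (\<tau> + of_nat j) / of_nat p)
            = 2 * pi * \<i> * of_nat m * \<tau> / of_nat p + 2 * pi * \<i> * of_nat (j * m) / of_nat p"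
        using p0 by (simp add: field_simps)
      then show ?thesis by (simp add: wm u_def exp_add)
    qed
    have up: "u ^ p = q ^ m"
    proof -
      have "u ^ p = exp (of_nat p * (2 * pi * \<i> * of_nat m * \<tau> / of_nat p))"
        unfolding u_def by (rule exp_of_nat_mult[symmetric])
      also have "\<dots> = exp (of_nat m * (2 * pi * \<i> * \<tau>))" using p0 by (intro arg_cong[where f=exp]) (simp add: field_simps)
      also have "\<dots> = q ^ m" unfolding q_def by (rule exp_of_nat_mult)
      finally show ?thesis .
    qed
    have m0: "m > 0" using False by (intro Nat.gr0I) simp
    have nw: "cmod (w j) < 1" for j using norm_qj[OF tau p0, of j] tau p0 by (simp add: w_def)
    have nz: "cmod (1 - w j ^ m) \<noteq> 0" for j
    proof
      assume "cmod (1 - w j ^ m) = 0"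
      then have "w j ^ m = 1" by simp
      then have "cmod (w j) ^ m = 1" by (metis norm_one norm_power)
      moreover have "cmod (w j) ^ m < 1 ^ m" using nw[of j] m0 by (intro power_strict_mono) auto
      ultimately show False by simp
    qed
    have "(\<Sum>j<p. ax (w j) m) = real m * (\<Sum>j<p. ln (cmod (1 - w j ^ m)))"
      by (simp add: ax_def sum_distrib_left)
    also have "(\<Sum>j<p. ln (cmod (1 - w j ^ m))) = ln (\<Prod>j<p. cmod (1 - w j ^ m))"
      using nz by (subst ln_prod) auto
    also have "(\<Prod>j<p. cmod (1 - w j ^ m)) = cmod (\<Prod>j<p. (1 - w j ^ m))"
      by (simp add: prod_norm)
    also have "(\<Prod>j<p. (1 - w j ^ m)) = 1 - q ^ m"
      unfolding wm2 using prod_one_minus_roots[OF p False, of u] up by simp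
    finally show ?thesis using False by (simp add: ax_def w_def)
  qed
qed


lemma rep_div:
  fixes p N r c n0 n :: nat
  assumes eq: "r + N * n0 = p * c" and h: "n mod p = n0"
  shows "r + N * n = p * (c + N * (n div p))"
proof -
  define t where "t = n div p"
  have n: "n = p * t + n0" using h div_mult_mod_eq[of n p] by (simp add: t_def mult.commute)
  have "r + N * n = (r + N * n0) + p * (N * t)" unfolding n by (simp add: algebra_simps)
  also have "\<dots> = p * c + p * (N * t)" by (simp only: eq)
  also have "\<dots> = p * (c + N * t)" by (simp add: algebra_simps)
  finally show ?thesis by (simp add: t_def)
qed

lemma dvd_iff_mod:
  fixes p N r c n0 n :: nat
  assumes p: "prime p" and cop: "coprime p N" and n0: "n0 < p" and eq: "r + N * n0 = p * c"
  shows "p dvd (r + N * n) \<longleftrightarrow> n mod p = n0"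
proof
  assume h: "p dvd (r + N * n)"
  have h1: "int p dvd int (r + N * n)" unfolding int_dvd_int_iff using h .
  have h2: "int p dvd int (r + N * n0)" unfolding int_dvd_int_iff eq by simp
  have "int p dvd int (r + N * n) - int (r + N * n0)" using h1 h2 by (rule dvd_diff)
  then have "int p dvd int N * (int n - int n0)" by (simp add: algebra_simps)
  moreover have "coprime (int p) (int N)" using cop by simp
  ultimately have "int p dvd (int n - int n0)" using coprime_dvd_mult_right_iff by blast
  then have "int n mod int p = int n0 mod int p" by (simp add: mod_eq_dvd_iff)
  then have "int (n mod p) = int (n0 mod p)" by (simp only: of_nat_mod)
  then have "n mod p = n0 mod p" by simp
  then show "n mod p = n0" using n0 by simp
next
  assume h: "n mod p = n0"
  show "p dvd (r + N * n)" using rep_div[OF eq h] by simp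
qed

lemma split_series:
  fixes a :: "nat \<Rightarrow> real" and p N r c n0 :: nat
  assumes p: "prime p" and cop: "coprime p N" and n0: "n0 < p" and eq: "r + N * n0 = p * c"
    and sa: "summable (\<lambda>n. a (r + N * n))" and sc: "summable (\<lambda>s. a (c + N * s))"
    and spc: "summable (\<lambda>s. a (p * (c + N * s)))"
  shows "(\<lambda>n. if p dvd (r + N * n) then real p ^ 2 * a ((r + N * n) div p) else a (r + N * n))
          sums ((\<Sum>n. a (r + N * n)) + (real p ^ 2 * (\<Sum>s. a (c + N * s)) - (\<Sum>s. a (p * (c + N * s)))))"
proof -
  have p0: "p > 0" using p prime_gt_0_nat by blast
  define d where "d = (\<lambda>s. real p ^ 2 * a (c + N * s) - a (p * (c + N * s)))"
  define e where "e = (\<lambda>n. if n mod p = n0 then d (n div p) else 0)"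
  have pt: "(if p dvd (r + N * n) then real p ^ 2 * a ((r + N * n) div p) else a (r + N * n))
            = a (r + N * n) + e n" for n
  proof (cases "n mod p = n0")
    case True
    have r: "r + N * n = p * (c + N * (n div p))" by (rule rep_div[OF eq True])
    have dv: "(r + N * n) div p = c + N * (n div p)" unfolding r using p0 by simp
    show ?thesis using dvd_iff_mod[OF p cop n0 eq, of n] True
      by (simp add: e_def d_def dv) (simp add: r)
  next
    case False
    then show ?thesis using dvd_iff_mod[OF p cop n0 eq, of n] by (simp add: e_def)
  qed
  have ds: "d sums (real p ^ 2 * (\<Sum>s. a (c + N * s)) - (\<Sum>s. a (p * (c + N * s))))"
    unfolding d_def using sc spc
    by (intro sums_diff sums_mult summable_sums)
  define g where "g = (\<lambda>s. p * s + n0)"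
  have sm: "strict_mono g" using p0 by (auto simp: g_def strict_mono_def)
  have zero: "e n = 0" if "n \<notin> range g" for n
  proof -
    have "n mod p \<noteq> n0"
    proof
      assume "n mod p = n0"
      then have "n = g (n div p)" using div_mult_mod_eq[of n p] by (simp add: g_def mult.commute)
      then show False using that by auto
    qed
    then show ?thesis by (simp add: e_def)
  qed
  have eg: "e (g s) = d s" for s using n0 p0 by (simp add: e_def g_def)
  have egs: "(\<lambda>s. e (g s)) sums (real p ^ 2 * (\<Sum>s. a (c + N * s)) - (\<Sum>s. a (p * (c + N * s))))"
    using ds by (simp add: eg)
  have "e sums (real p ^ 2 * (\<Sum>s. a (c + N * s)) - (\<Sum>s. a (p * (c + N * s))))"
  proof -
    have "(\<lambda>s. e (g s)) sums X \<longleftrightarrow> e sums X" for X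
      by (rule sums_mono_reindex[OF sm]) (simp add: zero)
    then show ?thesis using egs by blast
  qed
  then show ?thesis unfolding pt using sa by (intro sums_add summable_sums)
qed

theorem mainTheorem15:
  fixes N k p :: nat and \<tau> :: complex
  assumes "N \<ge> 3" and "1 \<le> k" and "k \<le> N - 1" and "coprime N k"
    and "prime p" and "odd p"
    and "p mod N = 1 \<or> p mod N = N - 1 \<or> p mod N = 0"
    and "Im \<tau> > 0"
  shows "let q = exp (2 * pi * \<i> * \<tau>);
             qj = (\<lambda>j::nat. exp (2 * pi * \<i> * (\<tau> + of_nat j) / of_nat p));
             chi = real_of_int (chiN N p)
         in (1 + chi * real p ^ 2) * Jsigma (of_nat N * \<tau>) (q ^ k)
            = (\<Sum>j<p. real p * Jsigma (of_nat N * (\<tau> + of_nat j) / of_nat p) (qj j ^ k))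
              + chi * Jsigma (of_nat N * of_nat p * \<tau>) (q ^ (p * k))"
proof -
  note N3 = assms(1) and p = assms(5) and tau = assms(8)
  have k0: "0 < k" and kN: "k < N" using assms(2,3,1) by auto
  have p0: "p > 0" using p prime_gt_0_nat by blast
  define q where "q = exp (2 * pi * \<i> * \<tau>)"
  define qj where "qj = (\<lambda>j::nat. exp (2 * pi * \<i> * (\<tau> + of_nat j) / of_nat p))"
  define chi where "chi = real_of_int (chiN N p)"
  define t where "t = ln (cmod q)"
  define a where "a = ax q"
  define K where "K = 1 / 3 * (real N * t) ^ 2 * B3 (real k / real N)"
  define S1 where "S1 = (\<Sum>n. a (k + N * n))"
  define S2 where "S2 = (\<Sum>n. a (N - k + N * n))"
  define T1 where "T1 = (\<Sum>n. a (p * (k + N * n)))"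
  define T2 where "T2 = (\<Sum>n. a (p * (N - k + N * n)))"
  define b where "b = (\<lambda>m. if p dvd m then real p ^ 2 * a (m div p) else a m)"
  define B1 where "B1 = (\<Sum>n. b (k + N * n))"
  define B2 where "B2 = (\<Sum>n. b (N - k + N * n))"
  have q0: "q \<noteq> 0" by (simp add: q_def)
  have q1: "cmod q < 1" using tau by (simp add: q_def norm_exp_eq_Re)
  have t_eq: "t = - 2 * pi * Im \<tau>" by (simp add: t_def q_def norm_exp_eq_Re)
  have sumA: "summable (\<lambda>n. a (u + N * n))" for u
    unfolding a_def using q1 N3 by (intro summable_ax) auto
  have sumAp: "summable (\<lambda>n. a (p * (u + N * n)))" for u
  proof -
    have "summable (\<lambda>n. a (p * u + (p * N) * n))"
      unfolding a_def using q1 N3 p0 by (intro summable_ax) auto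
    then show ?thesis by (simp add: algebra_simps)
  qed

  have LHS: "Jsigma (of_nat N * \<tau>) (q ^ k) = t * S1 - t * S2 + K"
  proof -
    have "exp (2 * pi * \<i> * (of_nat N * \<tau>)) = q ^ N"
      unfolding q_def by (subst exp_of_nat_mult[symmetric]) (simp add: mult_ac)
    from Jsigma_eval[OF this q0 q1 k0 kN] show ?thesis
      by (simp add: S1_def S2_def K_def t_def a_def)
  qed

  have THIRD: "Jsigma (of_nat N * of_nat p * \<tau>) (q ^ (p * k)) = t * T1 - t * T2 + real p ^ 2 * K"
  proof -
    have e: "exp (2 * pi * \<i> * (of_nat N * of_nat p * \<tau>)) = (q ^ p) ^ N"
      unfolding q_def by (simp add: exp_of_nat_mult[symmetric] mult_ac flip: power_mult)
    have x0: "q ^ p \<noteq> 0" using q0 by simp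
    have x1: "cmod (q ^ p) < 1" using q1 p0 by (simp add: norm_power power_less_one_iff)
    have lx: "ln (cmod (q ^ p)) = real p * t" using q0 by (simp add: t_def norm_power ln_realpow)
    have axp: "ax (q ^ p) m = a (p * m) / real p" for m
      using p0 by (simp add: ax_def a_def power_mult)
    have s1: "(\<Sum>n. ax (q ^ p) (k + N * n)) = T1 / real p"
      unfolding axp T1_def using sumAp by (simp add: suminf_divide)
    have s2: "(\<Sum>n. ax (q ^ p) (N - k + N * n)) = T2 / real p"
      unfolding axp T2_def using sumAp by (simp add: suminf_divide)
    have "q ^ (p * k) = (q ^ p) ^ k" by (simp add: power_mult)
    then show ?thesis
      using Jsigma_eval[OF e x0 x1 k0 kN] p0
      by (simp add: s1 s2 lx K_def power_mult_distrib)
  qed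

  have JT: "(\<Sum>j<p. real p * Jsigma (of_nat N * (\<tau> + of_nat j) / of_nat p) (qj j ^ k)) = t * B1 - t * B2 + K"
  proof -
    have nq: "cmod (qj j) = exp (- 2 * pi * Im \<tau> / real p)" for j
      unfolding qj_def by (rule norm_qj[OF tau p0])
    have x0: "qj j \<noteq> 0" for j by (simp add: qj_def)
    have x1: "cmod (qj j) < 1" for j using tau p0 by (simp add: nq)
    have lx: "ln (cmod (qj j)) = t / real p" for j by (simp add: nq t_eq)
    have e: "exp (2 * pi * \<i> * (of_nat N * (\<tau> + of_nat j) / of_nat p)) = qj j ^ N" for j
      unfolding qj_def by (subst exp_of_nat_mult[symmetric]) (simp add: mult_ac)
    have one: "real p * Jsigma (of_nat N * (\<tau> + of_nat j) / of_nat p) (qj j ^ k)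
       = t * (\<Sum>n. ax (qj j) (k + N * n)) - t * (\<Sum>n. ax (qj j) (N - k + N * n)) + K / real p" for j
      using Jsigma_eval[OF e x0 x1 k0 kN, of j] p0
      by (simp add: lx K_def field_simps power2_eq_square)
    have sj: "summable (\<lambda>n. ax (qj j) (u + N * n))" for j u
      using x1 N3 by (intro summable_ax) auto
    have bsum: "(\<Sum>j<p. ax (qj j) m) = b m" for m
      unfolding qj_def b_def a_def q_def using sum_ax_qj[OF tau p] by simp
    have c1: "(\<Sum>j<p. (\<Sum>n. ax (qj j) (u + N * n))) = (\<Sum>n. b (u + N * n))" for u
      using suminf_sum[where f="\<lambda>j n. ax (qj j) (u + N * n)" and I="{..<p}", OF sj]
      by (simp add: bsum)
    have "(\<Sum>j<p. real p * Jsigma (of_nat N * (\<tau> + of_nat j) / of_nat p) (qj j ^ k))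
        = t * (\<Sum>j<p. (\<Sum>n. ax (qj j) (k + N * n))) - t * (\<Sum>j<p. (\<Sum>n. ax (qj j) (N - k + N * n)))
          + real p * (K / real p)"
      by (simp add: one sum.distrib sum_subtractf sum_distrib_left)
    also have "\<dots> = t * B1 - t * B2 + K" using p0 by (simp add: c1 B1_def B2_def)
    finally show ?thesis .
  qed

  have cop: "coprime p N" if "chiN N p \<noteq> 0"
  proof -
    have "\<not> p dvd N"
    proof
      assume "p dvd N"
      then have "p \<le> N" using N3 by (intro dvd_imp_le) auto
      from that have m: "p mod N = 1 \<or> p mod N = N - 1" by (auto simp: chiN_def split: if_splits)
      show False
      proof (cases "p = N")
        case True then show False using m N3 by simp
      next
        case False
        then have "p < N" using \<open>p \<le> N\<close> by simp
        then have pm: "p mod N = p" by simp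
        show False
        proof (cases "p = 1")
          case True then show False using p by simp
        next
          case False
          then have "p = N - 1" using m pm by simp
          then have "p dvd N - p" using \<open>p dvd N\<close> by (simp add: dvd_diff_nat)
          moreover have "N - p = 1" using \<open>p = N - 1\<close> N3 by simp
          ultimately have "p dvd 1" by simp
          then show False using p by simp
        qed
      qed
    qed
    then show ?thesis using p by (simp add: prime_imp_coprime)
  qed

  have BB: "(1 + chi * real p ^ 2) * (t * S1 - t * S2 + K)
            = (t * B1 - t * B2 + K) + chi * (t * T1 - t * T2 + real p ^ 2 * K)"
  proof -
    consider (A) "p mod N = 1" | (B) "p mod N = N - 1" | (C) "p mod N = 0" using assms(7) by metis
    then show ?thesis
    proof cases
      case A
      have ch: "chiN N p = 1" using A by (simp add: chiN_def)
      define d where "d = p div N"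
      have pd: "p = N * d + 1" using div_mult_mod_eq[of p N] A by (simp add: d_def mult.commute)
      have cp: "coprime p N" using cop ch by simp
      have e1: "k + N * (k * d) = p * k" by (simp add: pd algebra_simps)
      have e2: "N - k + N * ((N - k) * d) = p * (N - k)" by (simp add: pd algebra_simps)
      have "k * d \<le> N * d" using kN by (intro mult_le_mono1) simp
      then have l1: "k * d < p" using pd by linarith
      have "(N - k) * d \<le> N * d" by (intro mult_le_mono1) simp
      then have l2: "(N - k) * d < p" using pd by linarith
      have hB1: "B1 = S1 + (real p ^ 2 * S1 - T1)"
        using sums_unique[OF split_series[OF p cp l1 e1 sumA sumA sumAp]]
        by (simp add: B1_def b_def S1_def T1_def)
      have hB2: "B2 = S2 + (real p ^ 2 * S2 - T2)"
        using sums_unique[OF split_series[OF p cp l2 e2 sumA sumA sumAp]]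
        by (simp add: B2_def b_def S2_def T2_def)
      show ?thesis unfolding hB1 hB2 by (simp add: chi_def ch algebra_simps)
    next
      case B
      have ch: "chiN N p = -1" using B N3 by (simp add: chiN_def)
      define e where "e = p div N + 1"
      have "p = N * (p div N) + (N - 1)" using div_mult_mod_eq[of p N] B by (simp add: mult.commute)
      then have "p + 1 = N * (p div N) + N" using N3 by simp
      then have pe: "p + 1 = N * e" by (simp add: e_def algebra_simps)
      have cp: "coprime p N" using cop ch by simp
      have ke: "k * e \<le> p" and ke1: "k * e \<ge> 1"
      proof -
        have "e \<ge> 1" by (simp add: e_def)
        have "(k + 1) * e \<le> N * e" using kN by (intro mult_le_mono1) simp
        then show "k * e \<le> p" using pe \<open>e \<ge> 1\<close> by (simp add: algebra_simps)
        show "k * e \<ge> 1" using k0 \<open>e \<ge> 1\<close> by simp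
      qed
      have pe': "1 + int p = int N * int e" using arg_cong[OF pe, of int] by simp
      have hk: "int k * (1 + int p) = int k * (int N * int e)" using pe' by simp
      have e1: "k + N * (p - k * e) = p * (N - k)"
      proof -
        have "int (k + N * (p - k * e)) = int k + int N * (int p - int k * int e)" using ke by (simp add: of_nat_diff)
        also have "\<dots> = int p * (int N - int k)" using hk by (simp add: algebra_simps)
        also have "\<dots> = int (p * (N - k))" using kN by (simp add: of_nat_diff)
        finally show ?thesis by (simp only: of_nat_eq_iff)
      qed
      have e2: "N - k + N * (k * e - 1) = p * k"
      proof -
        have "int (N - k + N * (k * e - 1)) = int N - int k + int N * (int k * int e - 1)" using ke1 kN by (simp add: of_nat_diff)
        also have "\<dots> = int p * int k" using hk by (simp add: algebra_simps)
        finally have "int (N - k + N * (k * e - 1)) = int (p * k)" by simp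
        then show ?thesis by (simp only: of_nat_eq_iff)
      qed
      have l1: "p - k * e < p" using ke1 p0 by simp
      have l2: "k * e - 1 < p" using ke ke1 by linarith
      have hB1: "B1 = S1 + (real p ^ 2 * S2 - T2)"
        using sums_unique[OF split_series[OF p cp l1 e1 sumA sumA sumAp]]
        by (simp add: B1_def b_def S1_def S2_def T2_def)
      have hB2: "B2 = S2 + (real p ^ 2 * S1 - T1)"
        using sums_unique[OF split_series[OF p cp l2 e2 sumA sumA sumAp]]
        by (simp add: B2_def b_def S2_def S1_def T1_def)
      show ?thesis unfolding hB1 hB2 by (simp add: chi_def ch algebra_simps)
    next
      case C
      have "N dvd p" using C by (simp add: mod_eq_0_iff_dvd)
      then have pN: "p = N" using p N3 unfolding prime_nat_iff by auto
      have ch: "chiN N p = 0" using C N3 by (simp add: chiN_def)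
      have nd1: "\<not> p dvd (k + N * n)" for n
      proof
        assume "p dvd (k + N * n)"
        then have "N dvd k" using pN by (simp add: dvd_add_left_iff)
        then show False using k0 kN by (simp add: nat_dvd_not_less)
      qed
      have nd2: "\<not> p dvd (N - k + N * n)" for n
      proof
        assume "p dvd (N - k + N * n)"
        then have "N dvd N - k" using pN by (simp add: dvd_add_left_iff)
        moreover have "0 < N - k" using kN by simp
        ultimately have "N \<le> N - k" by (rule dvd_imp_le)
        then show False using k0 kN by simp
      qed
      have "B1 = S1" by (simp add: B1_def S1_def b_def nd1)
      moreover have "B2 = S2" by (simp add: B2_def S2_def b_def nd2)
      ultimately show ?thesis by (simp add: chi_def ch)
    qed
  qed
  have hq: "exp (complex_of_real (2 * pi) * \<i> * \<tau>) = q" by (simp add: q_def)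
  have hqj: "exp (complex_of_real (2 * pi) * \<i> * (\<tau> + of_nat j) / of_nat p) = qj j" for j
    by (simp add: qj_def)
  show ?thesis
    unfolding Let_def hq hqj chi_def[symmetric] LHS THIRD JT by (rule BB)
qed

end
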